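(* Let $f:D\to\{0,1\}$, $D\subseteq\{0,1\}^n$, be a non-constant $n$-bit partial Boolean function. Then $f$ can be computed exactly by a quantum 1-query algorithm if and only if there exists a degree-1 SOS complex representation matrix $A$ of $f$ and $\bar f$ such that $A^\dagger A=\mathrm{diag}(u_0,u_1,\dots,u_n)$ for some numbers $u_0,\dots,u_n$ (i.e. the $n+1$ columns of $A$ are pairwise orthogonal).
   Context: An $n$-bit partial Boolean function is a map $f:D\to\{0,1\}$ with $D\subseteq\{0,1\}^n$; $\bar f(x)=1\oplus f(x)$ on $D$. For $x\in\{0,1\}^n$, $|F(x)\rangle_1=(1,(-1)^{x_1},\dots,(-1)^{x_n})^T$. A degree-1 SOS complex representation matrix of $f$ and $\bar f$ is a $(p+q)\times(n+1)$ complex matrix $A$ with rows $a^1,\dots,a^{p+q}\in\mathbb{C}^{n+1}$ (row vectors; columns indexed by $\emptyset,\{1\},\dots,\{n\}$) such that: $f(x)=\sum_{l=1}^p|a^l|F(x)\rangle_1|^2$ for all $x\in D$; $\sum_{l=1}^{p+q}|a^l|F(x)\rangle_1|^2=1$ for all $x\in\{0,1\}^n$; and hence $\bar f(x)=\sum_{l=p+1}^{p+q}|a^l|F(x)\rangle_1|^2$ for all $x\in D$. A quantum 1-query algorithm works in a finite-dimensional Hilbert space with orthonormal basis $\{|i,j'\rangle\}$, $i\in\{0,\dots,n\}$; the oracle is $O_x|i,j'\rangle=(-1)^{x_i}|i,j'\rangle$ for $i\ge 1$, $O_x|0,j'\rangle=|0,j'\rangle$; the algorithm applies input-independent unitaries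 $U_0,O_x,U_1$ to an initial state and performs a projective measurement with outcomes in $\{0,1\}$; it computes $f$ exactly if for every $x\in D$ the outcome is $f(x)$ with probability 1. *)

theory Defs
  imports Complex_Main "Jordan_Normal_Form.Schur_Decomposition"
begin

text \<open>Bit strings x in {0,1}^n are boolean lists of length n; bit x_i (1 \<le> i \<le> n)
  is x ! (i - 1), with True standing for 1.  A partial Boolean function is a domain
  D (a set of lists of length n) together with f :: bool list \<Rightarrow> bool, where
  f x = True means f(x) = 1; only its values on D matter.\<close>

definition bitstrings :: "nat \<Rightarrow> bool list set" where
  "bitstrings n = {x. length x = n}"

definition sgn_bit :: "bool \<Rightarrow> complex" where
  "sgn_bit b = (if b then -1 else 1)"

definition Fvec :: "nat \<Rightarrow> bool list \<Rightarrow> complex vec" where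
  "Fvec n x = vec (n+1) (\<lambda>j. if j = 0 then 1 else sgn_bit (x ! (j - 1)))"

text \<open>The product
  a^l |F(x)> is the (bilinear, unconjugated) row-times-column product.\<close>
definition sos1_rep_matrix ::
  "nat \<Rightarrow> bool list set \<Rightarrow> (bool list \<Rightarrow> bool) \<Rightarrow> nat \<Rightarrow> nat \<Rightarrow> complex mat \<Rightarrow> bool" where
  "sos1_rep_matrix n D f p q A \<longleftrightarrow>
     A \<in> carrier_mat (p + q) (n + 1) \<and>
     (\<forall>x\<in>D. (if f x then 1 else 0) = (\<Sum>l<p. (cmod (row A l \<bullet> Fvec n x))\<^sup>2)) \<and>
     (\<forall>x\<in>bitstrings n. (\<Sum>l<p+q. (cmod (row A l \<bullet> Fvec n x))\<^sup>2) = 1)"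

definition vnorm2 :: "complex vec \<Rightarrow> real" where
  "vnorm2 v = (\<Sum>i<dim_vec v. (cmod (v $ i))\<^sup>2)"

definition unitary_mat :: "nat \<Rightarrow> complex mat \<Rightarrow> bool" where
  "unitary_mat N U \<longleftrightarrow> U \<in> carrier_mat N N \<and> mat_adjoint U * U = 1\<^sub>m N"

definition orth_projector :: "nat \<Rightarrow> complex mat \<Rightarrow> bool" where
  "orth_projector N P \<longleftrightarrow> P \<in> carrier_mat N N \<and> mat_adjoint P = P \<and> P * P = P"

text \<open>The Hilbert space has orthonormal basis |i,j'> with i \<in> {0..n}, j' \<in> {0..<m};
  the basis vector |i,j'> is the standard basis vector with index i * m + j' of
  C^((n+1) m).\<close>
definition query_op :: "nat \<Rightarrow> nat \<Rightarrow> bool list \<Rightarrow> complex mat" where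
  "query_op n m x = mat ((n+1) * m) ((n+1) * m)
     (\<lambda>(k, l). if k = l then (if k div m = 0 then 1 else sgn_bit (x ! (k div m - 1))) else 0)"

definition exact_1query_computable ::
  "nat \<Rightarrow> bool list set \<Rightarrow> (bool list \<Rightarrow> bool) \<Rightarrow> bool" where
  "exact_1query_computable n D f \<longleftrightarrow>
     (\<exists>m psi U0 U1 P0 P1.
        let N = (n + 1) * m in
        m > 0 \<and> psi \<in> carrier_vec N \<and> vnorm2 psi = 1 \<and>
        unitary_mat N U0 \<and> unitary_mat N U1 \<and>
        orth_projector N P0 \<and> orth_projector N P1 \<and> P0 + P1 = 1\<^sub>m N \<and>
        (\<forall>x\<in>D. vnorm2 ((if f x then P1 else P0) *\<^sub>v (U1 *\<^sub>v (query_op n m x *\<^sub>v (U0 *\<^sub>v psi)))) = 1))"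

end

theory Submission
  imports Defs
begin

lemma adj_dim[simp]: "dim_row (mat_adjoint A) = dim_col A" "dim_col (mat_adjoint A) = dim_row A"
  unfolding mat_adjoint_def by auto
lemma adj_index: "i < dim_col A \<Longrightarrow> j < dim_row A \<Longrightarrow> mat_adjoint A $$ (i,j) = cnj (A $$ (j,i))"
  unfolding mat_adjoint_def by (simp add: mat_of_rows_index)
lemma adj_one: "mat_adjoint (1\<^sub>m k :: complex mat) = 1\<^sub>m k"
proof (rule eq_matI)
  fix i j assume "i < dim_row (1\<^sub>m k :: complex mat)" "j < dim_col (1\<^sub>m k :: complex mat)"
  then have ij: "i < k" "j < k" by simp_all
  have "mat_adjoint (1\<^sub>m k :: complex mat) $$ (i, j) = cnj (1\<^sub>m k $$ (j, i))"
    using ij by (intro adj_index) simp_all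
  also have "\<dots> = 1\<^sub>m k $$ (i, j)" using ij by (cases "i = j") simp_all
  finally show "mat_adjoint (1\<^sub>m k :: complex mat) $$ (i, j) = 1\<^sub>m k $$ (i, j)" .
qed simp_all
lemma adj_adj[simp]: "mat_adjoint (mat_adjoint (A::complex mat)) = A"
  by (rule eq_matI) (auto simp: adj_index)

lemma adj_minus: assumes "(A::complex mat) \<in> carrier_mat r c" "B \<in> carrier_mat r c"
  shows "mat_adjoint (A - B) = mat_adjoint A - mat_adjoint B"
proof -
  have d: "dim_row A = r" "dim_col A = c" "dim_row B = r" "dim_col B = c" using assms by auto
  show ?thesis
    by (rule eq_matI) (simp_all add: d adj_index)
qed
lemma adj_carrier[simp]: "A \<in> carrier_mat r c \<Longrightarrow> mat_adjoint A \<in> carrier_mat c r"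
  by (rule carrier_matI) (simp_all only: adj_dim carrier_matD)

lemma adj_mult: assumes "(A::complex mat) \<in> carrier_mat r k" "B \<in> carrier_mat k c"
  shows "mat_adjoint (A * B) = mat_adjoint B * mat_adjoint A"
proof (rule eq_matI)
  fix i j assume i: "i < dim_row (mat_adjoint B * mat_adjoint A)" and j: "j < dim_col (mat_adjoint B * mat_adjoint A)"
  have i': "i < c" and j': "j < r" using i j assms by auto
  have "mat_adjoint (A * B) $$ (i, j) = cnj (\<Sum>t<k. A $$ (j,t) * B $$ (t,i))"
    using i' j' assms by (simp add: scalar_prod_def lessThan_atLeast0 adj_index)
  also have "\<dots> = (\<Sum>t<k. cnj (B $$ (t,i)) * cnj (A $$ (j,t)))"
    by (simp add: mult.commute)
  also have "\<dots> = (mat_adjoint B * mat_adjoint A) $$ (i, j)"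
    using i' j' assms by (simp add: scalar_prod_def lessThan_atLeast0 adj_index)
  finally show "mat_adjoint (A * B) $$ (i, j) = (mat_adjoint B * mat_adjoint A) $$ (i, j)" .
next
  show "dim_row (mat_adjoint (A * B)) = dim_row (mat_adjoint B * mat_adjoint A)" using assms by simp
  show "dim_col (mat_adjoint (A * B)) = dim_col (mat_adjoint B * mat_adjoint A)" using assms by simp
qed

lemma adj_four: assumes "(A::complex mat) \<in> carrier_mat r1 c1" "B \<in> carrier_mat r1 c2"
   "C \<in> carrier_mat r2 c1" "D \<in> carrier_mat r2 c2"
  shows "mat_adjoint (four_block_mat A B C D) = four_block_mat (mat_adjoint A) (mat_adjoint C) (mat_adjoint B) (mat_adjoint D)"
proof -
  have d: "dim_row A = r1" "dim_col A = c1" "dim_row D = r2" "dim_col D = c2" "dim_row B = r1" "dim_col B = c2"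
      "dim_row C = r2" "dim_col C = c1" using assms by (simp_all only: carrier_matD)
  show ?thesis
  proof (rule eq_matI)
    fix i j assume i: "i < dim_row (four_block_mat (mat_adjoint A) (mat_adjoint C) (mat_adjoint B) (mat_adjoint D))"
      and j: "j < dim_col (four_block_mat (mat_adjoint A) (mat_adjoint C) (mat_adjoint B) (mat_adjoint D))"
    have i': "i < c1 + c2" and j': "j < r1 + r2" using i j d by (simp_all only: index_mat_four_block adj_dim)
    have e: "mat_adjoint (four_block_mat A B C D) $$ (i, j) = cnj (four_block_mat A B C D $$ (j,i))"
      using i' j' d by (intro adj_index) (simp_all only: index_mat_four_block)
    have fb: "four_block_mat (mat_adjoint A) (mat_adjoint C) (mat_adjoint B) (mat_adjoint D) $$ (i, j) =
      (if i < c1 then if j < r1 then mat_adjoint A $$ (i,j) else mat_adjoint C $$ (i, j - r1)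
       else if j < r1 then mat_adjoint B $$ (i - c1, j) else mat_adjoint D $$ (i - c1, j - r1))"
      using i' j' d by (subst index_mat_four_block) simp_all
    have fa: "four_block_mat A B C D $$ (j, i) =
      (if j < r1 then if i < c1 then A $$ (j,i) else B $$ (j, i - c1)
       else if i < c1 then C $$ (j - r1, i) else D $$ (j - r1, i - c1))"
      using i' j' d by (subst index_mat_four_block) simp_all
    show "mat_adjoint (four_block_mat A B C D) $$ (i, j) = four_block_mat (mat_adjoint A) (mat_adjoint C) (mat_adjoint B) (mat_adjoint D) $$ (i, j)"
      unfolding e fb fa using i' j' d
      by (cases "i < c1"; cases "j < r1") (simp_all add: adj_index)
  qed (simp_all add: d)
qed


lemma one_minus_idem: assumes X: "(X::complex mat) \<in> carrier_mat K K" and XX: "X * X = X"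
  shows "(1\<^sub>m K - X) * (1\<^sub>m K - X) = 1\<^sub>m K - X"
proof -
  have "(1\<^sub>m K - X) * (1\<^sub>m K - X) = 1\<^sub>m K * (1\<^sub>m K - X) - X * (1\<^sub>m K - X)"
    by (rule minus_mult_distrib_mat[OF one_carrier_mat X minus_carrier_mat[OF X]])
  also have "\<dots> = (1\<^sub>m K - X) - (X * 1\<^sub>m K - X * X)"
    using X by (simp add: mult_minus_distrib_mat[OF X one_carrier_mat X])
  also have "\<dots> = 1\<^sub>m K - X" unfolding XX using X
    by (intro eq_matI) (simp_all add: carrier_matD)
  finally show ?thesis .
qed

lemma mult_one_minus: assumes X: "(X::complex mat) \<in> carrier_mat K K" and Y: "Y \<in> carrier_mat K K"
  shows "Y * (1\<^sub>m K - X) = Y - Y * X" "(1\<^sub>m K - X) * Y = Y - X * Y"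
  using X Y by (simp_all add: mult_minus_distrib_mat[OF Y one_carrier_mat X]
     minus_mult_distrib_mat[OF one_carrier_mat X Y])

lemma minus_self_mat: "(Y::complex mat) \<in> carrier_mat K K \<Longrightarrow> Y - Y = 0\<^sub>m K K"
  by (intro eq_matI) (simp_all add: carrier_matD)

lemma plus_one_minus: "(Y::complex mat) \<in> carrier_mat K K \<Longrightarrow> Y + (1\<^sub>m K - Y) = 1\<^sub>m K"
   "(Y::complex mat) \<in> carrier_mat K K \<Longrightarrow> (1\<^sub>m K - Y) + Y = 1\<^sub>m K"
  by (intro eq_matI; simp add: carrier_matD)+

lemma zero_plus_zero: "0\<^sub>m K K + 0\<^sub>m K K = (0\<^sub>m K K :: complex mat)"
  by (intro eq_matI) simp_all

lemma dilation:
  fixes V Dg :: "complex mat"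
  assumes V: "V \<in> carrier_mat K K" and Dg: "Dg \<in> carrier_mat K K"
   and VV: "mat_adjoint V * V = Dg" and DgDg: "Dg * Dg = Dg" and VDg: "V * Dg = V"
  shows "mat_adjoint (four_block_mat V (1\<^sub>m K - V * mat_adjoint V) (1\<^sub>m K - Dg) (mat_adjoint V))
     * four_block_mat V (1\<^sub>m K - V * mat_adjoint V) (1\<^sub>m K - Dg) (mat_adjoint V) = 1\<^sub>m (K + K)"
proof -
  define W where "W = mat_adjoint V"
  define Q where "Q = V * W"
  have W: "W \<in> carrier_mat K K" unfolding W_def using V by simp
  have Q: "Q \<in> carrier_mat K K" unfolding Q_def using V W by simp
  have WV: "W * V = Dg" using VV unfolding W_def .
  have hDg: "mat_adjoint Dg = Dg"
    unfolding VV[symmetric] by (subst adj_mult[OF adj_carrier[OF V] V]) simp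
  have DgW: "Dg * W = W"
  proof -
    have "mat_adjoint (V * Dg) = mat_adjoint Dg * mat_adjoint V" by (rule adj_mult[OF V Dg])
    then show ?thesis unfolding VDg hDg W_def by simp
  qed
  have QQ: "Q * Q = Q"
  proof -
    have "Q * Q = V * (W * V) * W" unfolding Q_def using V W
      by (simp add: assoc_mult_mat[of _ K K _ K _ K])
    also have "\<dots> = V * W" unfolding WV VDg ..
    finally show ?thesis unfolding Q_def .
  qed
  have WQ: "W * Q = W" unfolding Q_def
    using V W by (simp add: assoc_mult_mat[of W K K V K W K, symmetric] WV DgW)
  have QV: "Q * V = V" unfolding Q_def
    using V W by (simp add: assoc_mult_mat[of V K K W K V K] WV VDg)
  have hQ: "mat_adjoint Q = Q" unfolding Q_def W_def
    by (subst adj_mult[OF V adj_carrier[OF V]]) simp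
  have h1Q: "mat_adjoint (1\<^sub>m K - Q) = 1\<^sub>m K - Q"
    by (subst adj_minus[OF one_carrier_mat Q]) (simp add: adj_one hQ)
  have h1D: "mat_adjoint (1\<^sub>m K - Dg) = 1\<^sub>m K - Dg"
    by (subst adj_minus[OF one_carrier_mat Dg]) (simp add: adj_one hDg)
  have c1: "1\<^sub>m K - Q \<in> carrier_mat K K" "1\<^sub>m K - Dg \<in> carrier_mat K K" using Q Dg by (simp_all add: minus_carrier_mat)
  have adjU: "mat_adjoint (four_block_mat V (1\<^sub>m K - Q) (1\<^sub>m K - Dg) W) = four_block_mat W (1\<^sub>m K - Dg) (1\<^sub>m K - Q) V"
    by (subst adj_four[OF V c1(1) c1(2) W]) (simp add: h1Q h1D W_def)
  have prod: "four_block_mat W (1\<^sub>m K - Dg) (1\<^sub>m K - Q) V * four_block_mat V (1\<^sub>m K - Q) (1\<^sub>m K - Dg) W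
     = four_block_mat (W * V + (1\<^sub>m K - Dg) * (1\<^sub>m K - Dg)) (W * (1\<^sub>m K - Q) + (1\<^sub>m K - Dg) * W)
        ((1\<^sub>m K - Q) * V + V * (1\<^sub>m K - Dg)) ((1\<^sub>m K - Q) * (1\<^sub>m K - Q) + V * W)"
    by (rule mult_four_block_mat[OF W c1(2) c1(1) V V c1(1) c1(2) W])
  have b1: "W * V + (1\<^sub>m K - Dg) * (1\<^sub>m K - Dg) = 1\<^sub>m K"
    unfolding WV one_minus_idem[OF Dg DgDg] by (rule plus_one_minus(1)[OF Dg])
  have b2: "W * (1\<^sub>m K - Q) + (1\<^sub>m K - Dg) * W = 0\<^sub>m K K"
    unfolding mult_one_minus[OF Q W] mult_one_minus[OF Dg W] WQ DgW minus_self_mat[OF W] by (rule zero_plus_zero)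
  have b3: "(1\<^sub>m K - Q) * V + V * (1\<^sub>m K - Dg) = 0\<^sub>m K K"
    unfolding mult_one_minus[OF Q V] mult_one_minus[OF Dg V] QV VDg minus_self_mat[OF V] by (rule zero_plus_zero)
  have b4: "(1\<^sub>m K - Q) * (1\<^sub>m K - Q) + Q = 1\<^sub>m K"
    unfolding one_minus_idem[OF Q QQ] by (rule plus_one_minus(2)[OF Q])
  show ?thesis
    unfolding Q_def[symmetric] W_def[symmetric] adjU prod b1 b2 b3 b4 by (rule four_block_one_mat)
qed


lemma vnorm2_cplx: "complex_of_real (vnorm2 v) = (\<Sum>i<dim_vec v. cnj (v $ i) * v $ i)"
proof -
  have h: "\<And>z. complex_of_real ((cmod z)\<^sup>2) = cnj z * z"
    by (simp only: complex_norm_square mult.commute)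
  show ?thesis unfolding vnorm2_def of_real_sum h ..
qed

lemma bilin:
  fixes M :: "complex mat"
  assumes M: "M \<in> carrier_mat r N" and y: "y \<in> carrier_vec N" and z: "z \<in> carrier_vec N"
  shows "(\<Sum>l<r. cnj ((M *\<^sub>v y) $ l) * (M *\<^sub>v z) $ l)
    = (\<Sum>a<N. \<Sum>b<N. cnj (y $ a) * z $ b * (mat_adjoint M * M) $$ (a, b))"
proof -
  have dM: "dim_row M = r" "dim_col M = N" using M by (simp_all only: carrier_matD)
  have dy: "dim_vec y = N" "dim_vec z = N" using y z by (simp_all only: carrier_vecD)
  have e1: "\<And>l. l < r \<Longrightarrow> (M *\<^sub>v y) $ l = (\<Sum>a<N. M $$ (l,a) * y $ a)"
    using dM dy by (simp add: scalar_prod_def lessThan_atLeast0)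
  have e2: "\<And>l. l < r \<Longrightarrow> (M *\<^sub>v z) $ l = (\<Sum>a<N. M $$ (l,a) * z $ a)"
    using dM dy by (simp add: scalar_prod_def lessThan_atLeast0)
  have e3: "\<And>a b. a < N \<Longrightarrow> b < N \<Longrightarrow> (mat_adjoint M * M) $$ (a, b) = (\<Sum>l<r. cnj (M $$ (l,a)) * M $$ (l,b))"
    using dM by (simp add: scalar_prod_def lessThan_atLeast0 adj_index)
  have "(\<Sum>l<r. cnj ((M *\<^sub>v y) $ l) * (M *\<^sub>v z) $ l)
     = (\<Sum>l<r. \<Sum>a<N. \<Sum>b<N. cnj (y $ a) * z $ b * (cnj (M $$ (l,a)) * M $$ (l,b)))"
    by (intro sum.cong refl) (simp add: e1 e2 sum_product sum_distrib_left sum_distrib_right mult_ac)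
  also have "\<dots> = (\<Sum>a<N. \<Sum>b<N. \<Sum>l<r. cnj (y $ a) * z $ b * (cnj (M $$ (l,a)) * M $$ (l,b)))"
    by (simp add: sum.swap[of _ "{..<r}"])
  also have "\<dots> = (\<Sum>a<N. \<Sum>b<N. cnj (y $ a) * z $ b * (mat_adjoint M * M) $$ (a, b))"
    by (intro sum.cong refl) (simp add: e3 sum_distrib_left)
  finally show ?thesis .
qed

lemma diag_mult_vec:
  assumes v: "v \<in> carrier_vec N" and t: "t < N"
  shows "(mat N N (\<lambda>(a,b). if a = b then d a else 0) *\<^sub>v v) $ t = d t * v $ t"
proof -
  have dv: "dim_vec v = N" using v by (simp only: carrier_vecD)
  have "(mat N N (\<lambda>(a,b). if a = b then d a else 0) *\<^sub>v v) $ t = (\<Sum>b\<in>{0..<N}. (if t = b then d t else 0) * v $ b)"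
    using t dv by (simp add: scalar_prod_def)
  also have "\<dots> = (\<Sum>b\<in>{0..<N}. if b = t then d t * v $ t else 0)"
    by (intro sum.cong refl) auto
  also have "\<dots> = d t * v $ t" using t by simp
  finally show ?thesis .
qed

lemma iso_norm:
  fixes U :: "complex mat"
  assumes U: "U \<in> carrier_mat N N" and UU: "mat_adjoint U * U = 1\<^sub>m N" and y: "y \<in> carrier_vec N"
  shows "vnorm2 (U *\<^sub>v y) = vnorm2 y"
proof -
  have dU: "dim_row U = N" using U by (simp only: carrier_matD)
  have dy: "dim_vec y = N" using y by (simp only: carrier_vecD)
  have "complex_of_real (vnorm2 (U *\<^sub>v y)) = (\<Sum>a<N. \<Sum>b<N. cnj (y $ a) * y $ b * (1\<^sub>m N) $$ (a, b))"
    unfolding vnorm2_cplx using bilin[OF U y y] dU UU by simp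
  also have "\<dots> = (\<Sum>a<N. cnj (y $ a) * y $ a)"
    by (intro sum.cong refl) (simp add: if_distrib cong: if_cong)
  also have "\<dots> = complex_of_real (vnorm2 y)" unfolding vnorm2_cplx dy ..
  finally show ?thesis by (simp only: of_real_eq_iff)
qed


lemma iso_inner:
  fixes U :: "complex mat"
  assumes U: "U \<in> carrier_mat N N" and UU: "mat_adjoint U * U = 1\<^sub>m N"
    and y: "y \<in> carrier_vec N" and z: "z \<in> carrier_vec N"
  shows "(\<Sum>l<N. cnj ((U *\<^sub>v y) $ l) * (U *\<^sub>v z) $ l) = (\<Sum>a<N. cnj (y $ a) * z $ a)"
proof -
  have "(\<Sum>l<N. cnj ((U *\<^sub>v y) $ l) * (U *\<^sub>v z) $ l) = (\<Sum>a<N. \<Sum>b<N. cnj (y $ a) * z $ b * (1\<^sub>m N) $$ (a, b))"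
    unfolding bilin[OF U y z] UU ..
  also have "\<dots> = (\<Sum>a<N. cnj (y $ a) * z $ a)"
    by (intro sum.cong refl) (simp add: if_distrib cong: if_cong)
  finally show ?thesis .
qed

lemma proj_inner:
  fixes P0 P1 :: "complex mat"
  assumes P1: "P1 \<in> carrier_mat N N" and P0: "P0 \<in> carrier_mat N N"
    and h1: "mat_adjoint P1 = P1" "P1 * P1 = P1" and h0: "mat_adjoint P0 = P0" "P0 * P0 = P0"
    and s: "P0 + P1 = 1\<^sub>m N"
    and y: "y \<in> carrier_vec N" and z: "z \<in> carrier_vec N"
  shows "(\<Sum>l<N. cnj ((P1 *\<^sub>v y) $ l) * (P1 *\<^sub>v z) $ l) + (\<Sum>l<N. cnj ((P0 *\<^sub>v y) $ l) * (P0 *\<^sub>v z) $ l)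
     = (\<Sum>a<N. cnj (y $ a) * z $ a)"
proof -
  have e: "\<And>a b. a < N \<Longrightarrow> b < N \<Longrightarrow> P1 $$ (a,b) + P0 $$ (a,b) = 1\<^sub>m N $$ (a,b)"
  proof -
    fix a b assume "a < N" "b < N"
    moreover have "dim_row P1 = N" "dim_col P1 = N" using P1 by (simp_all only: carrier_matD)
    ultimately have "(P0 + P1) $$ (a,b) = P0 $$ (a,b) + P1 $$ (a,b)" by (simp only: index_add_mat)
    then show "P1 $$ (a,b) + P0 $$ (a,b) = 1\<^sub>m N $$ (a,b)" unfolding s by simp
  qed
  have "(\<Sum>l<N. cnj ((P1 *\<^sub>v y) $ l) * (P1 *\<^sub>v z) $ l) + (\<Sum>l<N. cnj ((P0 *\<^sub>v y) $ l) * (P0 *\<^sub>v z) $ l)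
     = (\<Sum>a<N. \<Sum>b<N. cnj (y $ a) * z $ b * P1 $$ (a, b)) + (\<Sum>a<N. \<Sum>b<N. cnj (y $ a) * z $ b * P0 $$ (a, b))"
    unfolding bilin[OF P1 y z] bilin[OF P0 y z] h1 h0 ..
  also have "\<dots> = (\<Sum>a<N. \<Sum>b<N. cnj (y $ a) * z $ b * (P1 $$ (a, b) + P0 $$ (a,b)))"
    unfolding distrib_left sum.distrib ..
  also have "\<dots> = (\<Sum>a<N. \<Sum>b<N. cnj (y $ a) * z $ b * 1\<^sub>m N $$ (a, b))"
    by (intro sum.cong refl) (simp add: e)
  also have "\<dots> = (\<Sum>a<N. cnj (y $ a) * z $ a)"
    by (intro sum.cong refl) (simp add: if_distrib cong: if_cong)
  finally show ?thesis .
qed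

lemma cnorm_sum: "v \<in> carrier_vec N \<Longrightarrow> complex_of_real (vnorm2 v) = (\<Sum>a<N. cnj (v $ a) * v $ a)"
  using vnorm2_cplx[of v] by (simp add: carrier_vecD)

lemma cnorm_sum': "complex_of_real (\<Sum>a<N. (cmod (g a))\<^sup>2) = (\<Sum>a<N. cnj (g a) * g a)"
proof -
  have h: "\<And>z. complex_of_real ((cmod z)\<^sup>2) = cnj z * z"
    by (simp only: complex_norm_square mult.commute)
  show ?thesis unfolding of_real_sum h ..
qed

lemma sum_split_add: "(\<Sum>l<a+(b::nat). (g l::'a::comm_monoid_add)) = (\<Sum>l<a. g l) + (\<Sum>l<b. g (a+l))"
  by (induction b) (simp_all add: add.assoc)


lemma cmod_sgn_bit[simp]: "cmod (sgn_bit b) = 1"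
  unfolding sgn_bit_def by simp

lemma Fvec_index: "j < n + 1 \<Longrightarrow> Fvec n x $ j = (if j = 0 then 1 else sgn_bit (x ! (j - 1)))"
  unfolding Fvec_def by simp

lemma cmod_Fvec: "j < n + 1 \<Longrightarrow> cmod (Fvec n x $ j) = 1"
  by (simp add: Fvec_index)

lemma forward:
  assumes ex: "exact_1query_computable n D f" and Dsub: "D \<subseteq> bitstrings n"
  shows "\<exists>p q A u. sos1_rep_matrix n D f p q A \<and>
       mat_adjoint A * A = mat (n + 1) (n + 1) (\<lambda>(i, j). if i = j then u i else 0)"
proof -
  obtain m psi U0 U1 P0 P1 where m: "m > 0" and psi: "psi \<in> carrier_vec ((n+1)*m)" and npsi: "vnorm2 psi = 1"
    and U0: "unitary_mat ((n+1)*m) U0" and U1: "unitary_mat ((n+1)*m) U1"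
    and P0: "orth_projector ((n+1)*m) P0" and P1: "orth_projector ((n+1)*m) P1"
    and s: "P0 + P1 = 1\<^sub>m ((n+1)*m)"
    and ok: "\<forall>x\<in>D. vnorm2 ((if f x then P1 else P0) *\<^sub>v (U1 *\<^sub>v (query_op n m x *\<^sub>v (U0 *\<^sub>v psi)))) = 1"
    using ex unfolding exact_1query_computable_def Let_def by blast
  define N where "N = (n+1)*m"
  have U0c: "U0 \<in> carrier_mat N N" "mat_adjoint U0 * U0 = 1\<^sub>m N" using U0 unfolding unitary_mat_def N_def by simp_all
  have U1c: "U1 \<in> carrier_mat N N" "mat_adjoint U1 * U1 = 1\<^sub>m N" using U1 unfolding unitary_mat_def N_def by simp_all
  have P0c: "P0 \<in> carrier_mat N N" "mat_adjoint P0 = P0" "P0 * P0 = P0" using P0 unfolding orth_projector_def N_def by simp_all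
  have P1c: "P1 \<in> carrier_mat N N" "mat_adjoint P1 = P1" "P1 * P1 = P1" using P1 unfolding orth_projector_def N_def by simp_all
  have sN: "P0 + P1 = 1\<^sub>m N" using s unfolding N_def .
  have psic: "psi \<in> carrier_vec N" using psi unfolding N_def .
  define phi where "phi = U0 *\<^sub>v psi"
  have phic: "phi \<in> carrier_vec N" unfolding phi_def using U0c(1) psic by simp
  have nphi: "vnorm2 phi = 1" unfolding phi_def using iso_norm[OF U0c psic] npsi by simp
  have dphi: "dim_vec phi = N" using phic by (simp only: carrier_vecD)
  define yb where "yb i = vec N (\<lambda>t. if t div m = i then phi $ t else 0)" for i
  define B1 where "B1 = P1 * U1"
  define B0 where "B0 = P0 * U1"
  have B1c: "B1 \<in> carrier_mat N N" unfolding B1_def using P1c(1) U1c(1) by simp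
  have B0c: "B0 \<in> carrier_mat N N" unfolding B0_def using P0c(1) U1c(1) by simp
  define A where "A = mat (N+N) (n+1) (\<lambda>(l,i). if l < N then (B1 *\<^sub>v yb i) $ l else (B0 *\<^sub>v yb i) $ (l - N))"
  define w where "w x = vec N (\<lambda>t. Fvec n x $ (t div m) * phi $ t)" for x
  have divlt: "\<And>t. t < N \<Longrightarrow> t div m < n+1"
    unfolding N_def by (simp add: less_mult_imp_div_less)
  have ybc: "\<And>i. yb i \<in> carrier_vec N" unfolding yb_def by simp
  have wc: "\<And>x. w x \<in> carrier_vec N" unfolding w_def by simp
  have L1: "\<And>B r l c. B \<in> carrier_mat r N \<Longrightarrow> l < r \<Longrightarrow>
      (\<Sum>i<n+1. (B *\<^sub>v yb i) $ l * c i) = (B *\<^sub>v vec N (\<lambda>t. c (t div m) * phi $ t)) $ l"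
  proof -
    fix B :: "complex mat" and r l c assume B: "B \<in> carrier_mat r N" and l: "l < r"
    have dB: "dim_row B = r" "dim_col B = N" using B by (simp_all only: carrier_matD)
    have e1: "\<And>i. (B *\<^sub>v yb i) $ l = (\<Sum>t<N. B $$ (l,t) * (if t div m = i then phi $ t else 0))"
      using l dB unfolding yb_def by (simp add: scalar_prod_def lessThan_atLeast0)
    have "(\<Sum>i<n+1. (B *\<^sub>v yb i) $ l * c i) = (\<Sum>i<n+1. \<Sum>t<N. B $$ (l,t) * (if t div m = i then phi $ t else 0) * c i)"
      unfolding e1 sum_distrib_right ..
    also have "\<dots> = (\<Sum>t<N. \<Sum>i<n+1. B $$ (l,t) * (if t div m = i then phi $ t else 0) * c i)"
      by (rule sum.swap)
    also have "\<dots> = (\<Sum>t<N. B $$ (l,t) * (c (t div m) * phi $ t))"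
    proof (intro sum.cong refl)
      fix t assume t: "t \<in> {..<N}"
      have "(\<Sum>i<n+1. B $$ (l,t) * (if t div m = i then phi $ t else 0) * c i)
          = (\<Sum>i<n+1. if i = t div m then B $$ (l,t) * (c (t div m) * phi $ t) else 0)"
        by (intro sum.cong refl) auto
      also have "\<dots> = B $$ (l,t) * (c (t div m) * phi $ t)" using divlt[of t] t by simp
      finally show "(\<Sum>i<n+1. B $$ (l,t) * (if t div m = i then phi $ t else 0) * c i) = B $$ (l,t) * (c (t div m) * phi $ t)" .
    qed
    also have "\<dots> = (B *\<^sub>v vec N (\<lambda>t. c (t div m) * phi $ t)) $ l"
      using l dB by (simp add: scalar_prod_def lessThan_atLeast0)
    finally show "(\<Sum>i<n+1. (B *\<^sub>v yb i) $ l * c i) = (B *\<^sub>v vec N (\<lambda>t. c (t div m) * phi $ t)) $ l" .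
  qed
  have wq: "\<And>x. query_op n m x *\<^sub>v phi = w x"
  proof -
    fix x
    have qd: "query_op n m x = mat N N (\<lambda>(a,b). if a = b then (if a div m = 0 then 1 else sgn_bit (x ! (a div m - 1))) else 0)"
      unfolding query_op_def N_def ..
    show "query_op n m x *\<^sub>v phi = w x"
    proof (rule eq_vecI)
      fix t assume "t < dim_vec (w x)"
      then have t: "t < N" unfolding w_def by simp
      show "(query_op n m x *\<^sub>v phi) $ t = w x $ t"
        unfolding qd diag_mult_vec[OF phic t] using t divlt[OF t] by (simp add: w_def Fvec_index)
    qed (simp add: w_def query_op_def N_def)
  qed
  have rowA: "\<And>x l. l < N + N \<Longrightarrow> row A l \<bullet> Fvec n x = (if l < N then (B1 *\<^sub>v w x) $ l else (B0 *\<^sub>v w x) $ (l - N))"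
  proof -
    fix x l assume l: "l < N + N"
    have "row A l \<bullet> Fvec n x = (\<Sum>i<n+1. (if l < N then (B1 *\<^sub>v yb i) $ l else (B0 *\<^sub>v yb i) $ (l - N)) * Fvec n x $ i)"
      using l unfolding A_def by (simp add: scalar_prod_def lessThan_atLeast0 Fvec_def)
    also have "\<dots> = (if l < N then (B1 *\<^sub>v w x) $ l else (B0 *\<^sub>v w x) $ (l - N))"
    proof (cases "l < N")
      case True
      then show ?thesis using L1[OF B1c True, of "\<lambda>i. Fvec n x $ i"] unfolding w_def by simp
    next
      case False
      then have "l - N < N" using l by simp
      then show ?thesis using False L1[OF B0c, of "l - N" "\<lambda>i. Fvec n x $ i"] unfolding w_def by simp
    qed
    finally show "row A l \<bullet> Fvec n x = (if l < N then (B1 *\<^sub>v w x) $ l else (B0 *\<^sub>v w x) $ (l - N))" .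
  qed
  have nw: "\<And>x. vnorm2 (w x) = 1"
  proof -
    fix x
    have "vnorm2 (w x) = (\<Sum>t<N. (cmod (phi $ t))\<^sup>2)"
      unfolding vnorm2_def w_def by (intro sum.cong) (simp_all add: norm_mult cmod_Fvec[OF divlt])
    also have "\<dots> = 1" using nphi unfolding vnorm2_def dphi .
    finally show "vnorm2 (w x) = 1" .
  qed
  have B1w: "\<And>v. v \<in> carrier_vec N \<Longrightarrow> B1 *\<^sub>v v = P1 *\<^sub>v (U1 *\<^sub>v v)"
    unfolding B1_def using P1c(1) U1c(1) by (simp add: assoc_mult_mat_vec)
  have B0w: "\<And>v. v \<in> carrier_vec N \<Longrightarrow> B0 *\<^sub>v v = P0 *\<^sub>v (U1 *\<^sub>v v)"
    unfolding B0_def using P0c(1) U1c(1) by (simp add: assoc_mult_mat_vec)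
  have U1vc: "\<And>v. v \<in> carrier_vec N \<Longrightarrow> U1 *\<^sub>v v \<in> carrier_vec N" using U1c(1) by simp
  have pn: "\<And>v. v \<in> carrier_vec N \<Longrightarrow> vnorm2 (P1 *\<^sub>v v) + vnorm2 (P0 *\<^sub>v v) = vnorm2 v"
  proof -
    fix v :: "complex vec" assume v: "v \<in> carrier_vec N"
    have c1: "P1 *\<^sub>v v \<in> carrier_vec N" "P0 *\<^sub>v v \<in> carrier_vec N" using P1c(1) P0c(1) v by simp_all
    have "complex_of_real (vnorm2 (P1 *\<^sub>v v) + vnorm2 (P0 *\<^sub>v v)) = complex_of_real (vnorm2 v)"
      unfolding of_real_add cnorm_sum[OF v] cnorm_sum[OF c1(1)] cnorm_sum[OF c1(2)]
      by (rule proj_inner[OF P1c(1) P0c(1) P1c(2,3) P0c(2,3) sN v v])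
    then show "vnorm2 (P1 *\<^sub>v v) + vnorm2 (P0 *\<^sub>v v) = vnorm2 v" by (simp only: of_real_eq_iff)
  qed
  have sump: "\<And>x. (\<Sum>l<N. (cmod (row A l \<bullet> Fvec n x))\<^sup>2) = vnorm2 (P1 *\<^sub>v (U1 *\<^sub>v w x))"
    unfolding vnorm2_def using rowA B1w[OF wc] P1c(1) U1c(1) by (simp add: mult_mat_vec_carrier)
  have sumq: "\<And>x. (\<Sum>l<N. (cmod (row A (N + l) \<bullet> Fvec n x))\<^sup>2) = vnorm2 (P0 *\<^sub>v (U1 *\<^sub>v w x))"
    unfolding vnorm2_def using rowA B0w[OF wc] P0c(1) U1c(1) by (simp add: mult_mat_vec_carrier)
  have sumall: "\<And>x. (\<Sum>l<N+N. (cmod (row A l \<bullet> Fvec n x))\<^sup>2) = 1"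
    unfolding sum_split_add sump sumq pn[OF U1vc[OF wc]] iso_norm[OF U1c wc] nw ..
  have Ac: "A \<in> carrier_mat (N + N) (n + 1)" unfolding A_def by simp
  have dA: "dim_row A = N + N" "dim_col A = n + 1" using Ac by (simp_all only: carrier_matD)
  have orth: "\<And>i k. i < n + 1 \<Longrightarrow> k < n + 1 \<Longrightarrow> (mat_adjoint A * A) $$ (i, k) = (\<Sum>a<N. cnj (yb i $ a) * yb k $ a)"
  proof -
    fix i k assume i: "i < n + 1" and k: "k < n + 1"
    have "(mat_adjoint A * A) $$ (i, k) = (\<Sum>l<N+N. cnj (A $$ (l, i)) * A $$ (l, k))"
      using i k dA by (simp add: scalar_prod_def lessThan_atLeast0 adj_index)
    also have "\<dots> = (\<Sum>l<N. cnj ((B1 *\<^sub>v yb i) $ l) * (B1 *\<^sub>v yb k) $ l) + (\<Sum>l<N. cnj ((B0 *\<^sub>v yb i) $ l) * (B0 *\<^sub>v yb k) $ l)"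
      unfolding sum_split_add using i k by (simp add: A_def)
    also have "\<dots> = (\<Sum>l<N. cnj ((P1 *\<^sub>v (U1 *\<^sub>v yb i)) $ l) * (P1 *\<^sub>v (U1 *\<^sub>v yb k)) $ l) + (\<Sum>l<N. cnj ((P0 *\<^sub>v (U1 *\<^sub>v yb i)) $ l) * (P0 *\<^sub>v (U1 *\<^sub>v yb k)) $ l)"
      unfolding B1w[OF ybc] B0w[OF ybc] ..
    also have "\<dots> = (\<Sum>l<N. cnj ((U1 *\<^sub>v yb i) $ l) * (U1 *\<^sub>v yb k) $ l)"
      by (rule proj_inner[OF P1c(1) P0c(1) P1c(2,3) P0c(2,3) sN U1vc[OF ybc] U1vc[OF ybc]])
    also have "\<dots> = (\<Sum>a<N. cnj (yb i $ a) * yb k $ a)"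
      by (rule iso_inner[OF U1c ybc ybc])
    finally show "(mat_adjoint A * A) $$ (i, k) = (\<Sum>a<N. cnj (yb i $ a) * yb k $ a)" .
  qed
  define u where "u i = (mat_adjoint A * A) $$ (i, i)" for i
  have diag: "mat_adjoint A * A = mat (n + 1) (n + 1) (\<lambda>(i, j). if i = j then u i else 0)"
  proof (rule eq_matI)
    fix i k assume "i < dim_row (mat (n + 1) (n + 1) (\<lambda>(i, j). if i = j then u i else 0))"
      and "k < dim_col (mat (n + 1) (n + 1) (\<lambda>(i, j). if i = j then u i else 0))"
    then have i: "i < n + 1" and k: "k < n + 1" by simp_all
    show "(mat_adjoint A * A) $$ (i, k) = mat (n + 1) (n + 1) (\<lambda>(i, j). if i = j then u i else 0) $$ (i, k)"
    proof (cases "i = k")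
      case True
      then show ?thesis using i unfolding u_def by simp
    next
      case False
      have "(\<Sum>a<N. cnj (yb i $ a) * yb k $ a) = 0"
        by (intro sum.neutral) (use False in \<open>auto simp: yb_def\<close>)
      then show ?thesis using orth[OF i k] False i k by simp
    qed
  qed (simp_all add: dA)
  have sos: "sos1_rep_matrix n D f N N A"
    unfolding sos1_rep_matrix_def
  proof (intro conjI ballI)
    show "A \<in> carrier_mat (N + N) (n + 1)" by (rule Ac)
  next
    fix x assume xb: "x \<in> bitstrings n"
    show "(\<Sum>l<N+N. (cmod (row A l \<bullet> Fvec n x))\<^sup>2) = 1" by (rule sumall)
  next
    fix x assume xD: "x \<in> D"
    have okx: "vnorm2 ((if f x then P1 else P0) *\<^sub>v (U1 *\<^sub>v w x)) = 1"
      using ok xD unfolding phi_def[symmetric] wq by blast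
    have tot: "vnorm2 (P1 *\<^sub>v (U1 *\<^sub>v w x)) + vnorm2 (P0 *\<^sub>v (U1 *\<^sub>v w x)) = 1"
      unfolding pn[OF U1vc[OF wc]] iso_norm[OF U1c wc] nw ..
    show "(if f x then 1 else 0) = (\<Sum>l<N. (cmod (row A l \<bullet> Fvec n x))\<^sup>2)"
      unfolding sump using okx tot by (cases "f x") simp_all
  qed
  show ?thesis using sos diag by blast
qed


lemma sum_blocks:
  fixes g :: "nat \<Rightarrow> 'a::comm_monoid_add"
  assumes m: "m > 0" and z: "\<And>t. t < (n+1)*m \<Longrightarrow> t mod m \<noteq> 0 \<Longrightarrow> g t = 0"
  shows "(\<Sum>t<(n+1)*m. g t) = (\<Sum>i<n+1. g (i*m))"
proof -
  have inj: "inj_on (\<lambda>i. i*m) {..<n+1}"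
  proof (rule inj_onI)
    fix i j assume "i * m = j * m"
    then show "i = j" using m by simp
  qed
  have "(\<Sum>i<n+1. g (i*m)) = sum g ((\<lambda>i. i*m) ` {..<n+1})"
    using sum.reindex[OF inj, of g] by (simp add: comp_def)
  also have "\<dots> = (\<Sum>t<(n+1)*m. g t)"
  proof (rule sum.mono_neutral_left)
    show "finite {..<(n+1)*m}" by simp
    show "(\<lambda>i. i*m) ` {..<n+1} \<subseteq> {..<(n+1)*m}"
    proof
      fix t assume "t \<in> (\<lambda>i. i*m) ` {..<n+1}"
      then obtain i where i: "i < n+1" and t: "t = i*m" by blast
      have "i*m < (n+1)*m" using i m by (intro mult_strict_right_mono) simp_all
      then show "t \<in> {..<(n+1)*m}" using t by simp
    qed
    show "\<forall>t\<in>{..<(n+1)*m} - (\<lambda>i. i*m) ` {..<n+1}. g t = 0"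
    proof
      fix t assume t: "t \<in> {..<(n+1)*m} - (\<lambda>i. i*m) ` {..<n+1}"
      then have tl: "t < (n+1)*m" and tn: "t \<notin> (\<lambda>i. i*m) ` {..<n+1}" by simp_all
      show "g t = 0"
      proof (cases "t mod m = 0")
        case True
        have "t div m < n+1" using tl by (simp add: less_mult_imp_div_less)
        moreover have "t = (t div m) * m" using True div_mult_mod_eq[of t m] by simp
        ultimately have "t \<in> (\<lambda>i. i*m) ` {..<n+1}" by (intro image_eqI[of t _ "t div m"]) simp_all
        then show ?thesis using tn by (simp only: notE)
      next
        case False
        then show ?thesis using z tl by simp
      qed
    qed
  qed
  finally show ?thesis by simp
qed

lemma sum_restrict_lt:
  fixes h :: "nat \<Rightarrow> 'a::comm_monoid_add"
  assumes "p \<le> N"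
  shows "(\<Sum>a<N. if a < p then h a else 0) = (\<Sum>a<p. h a)"
  using assms
proof (induction N)
  case 0
  then show ?case by simp
next
  case (Suc N)
  show ?case
  proof (cases "p \<le> N")
    case True
    then show ?thesis using Suc by simp
  next
    case False
    then have p: "p = Suc N" using Suc.prems by simp
    show ?thesis unfolding p by (intro sum.cong refl) simp
  qed
qed


lemma diag_proj:
  assumes d1: "\<And>a. d a * d a = d a" and d2: "\<And>a. cnj (d a) = d a"
  shows "orth_projector N (mat N N (\<lambda>(a,b). if a = b then d a else 0))"
  unfolding orth_projector_def
proof (intro conjI)
  let ?P = "mat N N (\<lambda>(a,b). if a = b then d a else 0)"
  show "?P \<in> carrier_mat N N" by simp
  show "mat_adjoint ?P = ?P"
  proof (rule eq_matI)
    fix i j assume "i < dim_row ?P" "j < dim_col ?P"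
    then have ij: "i < N" "j < N" by simp_all
    show "mat_adjoint ?P $$ (i, j) = ?P $$ (i, j)"
      using ij by (subst adj_index) (simp_all add: d2)
  qed simp_all
  show "?P * ?P = ?P"
  proof (rule eq_matI)
    fix i j assume "i < dim_row ?P" "j < dim_col ?P"
    then have ij: "i < N" "j < N" by simp_all
    have "(?P * ?P) $$ (i, j) = (\<Sum>t\<in>{0..<N}. (if i = t then d i else 0) * (if t = j then d t else 0))"
      using ij by (simp add: scalar_prod_def)
    also have "\<dots> = (\<Sum>t\<in>{0..<N}. if t = i then (if i = j then d i else 0) else 0)"
      by (intro sum.cong refl) (auto simp: d1)
    also have "\<dots> = ?P $$ (i, j)" using ij by simp
    finally show "(?P * ?P) $$ (i, j) = ?P $$ (i, j)" .
  qed simp_all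
qed


lemma diag_norm:
  assumes y: "y \<in> carrier_vec N"
  shows "vnorm2 (mat N N (\<lambda>(a,b). if a = b then d a else 0) *\<^sub>v y) = (\<Sum>a<N. (cmod (d a))\<^sup>2 * (cmod (y $ a))\<^sup>2)"
  unfolding vnorm2_def
proof (intro sum.cong)
  fix a assume a: "a \<in> {..<N}"
  then have aN: "a < N" by simp
  have e: "(mat N N (\<lambda>(a,b). if a = b then d a else 0) *\<^sub>v y) $ a = d a * y $ a"
    by (rule diag_mult_vec[OF y aN])
  show "(cmod ((mat N N (\<lambda>(a,b). if a = b then d a else 0) *\<^sub>v y) $ a))\<^sup>2 = (cmod (d a))\<^sup>2 * (cmod (y $ a))\<^sup>2"
    unfolding e by (simp add: norm_mult power_mult_distrib)
qed simp

lemma backward: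
  assumes sos: "sos1_rep_matrix n D f p q A" and Dsub: "D \<subseteq> bitstrings n"
    and diag: "mat_adjoint A * A = mat (n + 1) (n + 1) (\<lambda>(i, j). if i = j then u i else 0)"
  shows "exact_1query_computable n D f"
proof -
  define P where "P = p + q"
  have Ac: "A \<in> carrier_mat P (n+1)" using sos unfolding sos1_rep_matrix_def P_def by blast
  have sosD: "\<And>x. x \<in> D \<Longrightarrow> (if f x then 1 else 0) = (\<Sum>l<p. (cmod (row A l \<bullet> Fvec n x))\<^sup>2)"
    using sos unfolding sos1_rep_matrix_def by blast
  have sosT: "\<And>x. x \<in> bitstrings n \<Longrightarrow> (\<Sum>l<P. (cmod (row A l \<bullet> Fvec n x))\<^sup>2) = 1"
    using sos unfolding sos1_rep_matrix_def P_def by blast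
  have dA: "dim_row A = P" "dim_col A = n + 1" using Ac by (simp_all only: carrier_matD)
  have G: "\<And>a b. a < n+1 \<Longrightarrow> b < n+1 \<Longrightarrow> (\<Sum>l<P. cnj (A $$ (l,a)) * A $$ (l,b)) = (if a = b then u a else 0)"
  proof -
    fix a b assume a: "a < n+1" and b: "b < n+1"
    have "(mat_adjoint A * A) $$ (a, b) = (\<Sum>l<P. cnj (A $$ (l,a)) * A $$ (l,b))"
      using a b dA by (simp add: scalar_prod_def lessThan_atLeast0 adj_index)
    then show "(\<Sum>l<P. cnj (A $$ (l,a)) * A $$ (l,b)) = (if a = b then u a else 0)"
      unfolding diag using a b by simp
  qed
  define r where "r c = (\<Sum>l<P. (cmod (A $$ (l,c)))\<^sup>2)" for c
  have r0: "\<And>c. r c \<ge> 0" unfolding r_def by (intro sum_nonneg) simp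
  have ur: "\<And>c. c < n+1 \<Longrightarrow> u c = complex_of_real (r c)"
    unfolding r_def cnorm_sum' using G by simp
  have colzero: "\<And>c l. c < n+1 \<Longrightarrow> r c = 0 \<Longrightarrow> l < P \<Longrightarrow> A $$ (l,c) = 0"
  proof -
    fix c l assume c: "c < n+1" and rc: "r c = 0" and l: "l < P"
    have "\<forall>l\<in>{..<P}. (cmod (A $$ (l,c)))\<^sup>2 = 0"
      using rc unfolding r_def by (subst sum_nonneg_eq_0_iff[symmetric]) simp_all
    then show "A $$ (l,c) = 0" using l by simp
  qed
  define x0 where "x0 = replicate n False"
  have x0b: "x0 \<in> bitstrings n" unfolding x0_def bitstrings_def by simp
  define F0 where "F0 = Fvec n x0"
  have F0c: "F0 \<in> carrier_vec (n+1)" unfolding F0_def Fvec_def by simp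
  have F01: "\<And>j. j < n+1 \<Longrightarrow> F0 $ j = 1" unfolding F0_def x0_def
    by (simp add: Fvec_index sgn_bit_def)
  have sumr: "(\<Sum>c<n+1. r c) = 1"
  proof -
    have "complex_of_real 1 = complex_of_real (\<Sum>l<P. (cmod (row A l \<bullet> F0))\<^sup>2)"
      using sosT[OF x0b] unfolding F0_def by simp
    also have "\<dots> = (\<Sum>l<P. cnj ((A *\<^sub>v F0) $ l) * (A *\<^sub>v F0) $ l)"
      unfolding cnorm_sum' using dA by simp
    also have "\<dots> = (\<Sum>a<n+1. \<Sum>b<n+1. cnj (F0 $ a) * F0 $ b * (mat_adjoint A * A) $$ (a, b))"
      by (rule bilin[OF Ac F0c F0c])
    also have "\<dots> = (\<Sum>a<n+1. \<Sum>b<n+1. if b = a then u a else 0)"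
      unfolding diag by (intro sum.cong refl) (simp add: F01)
    also have "\<dots> = (\<Sum>a<n+1. complex_of_real (r a))"
      by (intro sum.cong refl) (simp add: ur)
    finally show ?thesis unfolding of_real_sum[symmetric] of_real_eq_iff by simp
  qed
  define su where "su c = sqrt (r c)" for c
  have su2: "\<And>c. (su c)\<^sup>2 = r c" unfolding su_def using r0 by simp
  have su0: "\<And>c. su c = 0 \<longleftrightarrow> r c = 0" unfolding su_def by simp
  define K where "K = (n+1)*(P+1)"
  have PK: "P < K" unfolding K_def by simp
  have nK: "n + 1 \<le> K" unfolding K_def by simp
  define V where "V = mat K K (\<lambda>(s,c). if s < P \<and> c < n+1 \<and> r c \<noteq> 0 then A $$ (s,c) / complex_of_real (su c) else 0)"
  define Dg where "Dg = mat K K (\<lambda>(a,b). if a = b \<and> a < n+1 \<and> r a \<noteq> 0 then 1 else (0::complex))"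
  have Vc: "V \<in> carrier_mat K K" unfolding V_def by simp
  have Dgc: "Dg \<in> carrier_mat K K" unfolding Dg_def by simp
  have VV: "mat_adjoint V * V = Dg"
  proof (rule eq_matI)
    fix a b assume "a < dim_row Dg" "b < dim_col Dg"
    then have a: "a < K" and b: "b < K" unfolding Dg_def by simp_all
    have e: "(mat_adjoint V * V) $$ (a, b) = (\<Sum>s<K. cnj (V $$ (s,a)) * V $$ (s,b))"
      using a b Vc by (simp add: scalar_prod_def lessThan_atLeast0 adj_index carrier_matD)
    show "(mat_adjoint V * V) $$ (a, b) = Dg $$ (a, b)"
    proof (cases "a < n+1 \<and> r a \<noteq> 0 \<and> b < n+1 \<and> r b \<noteq> 0")
      case True
      then have a1: "a < n+1" "r a \<noteq> 0" and b1: "b < n+1" "r b \<noteq> 0" by simp_all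
      have "(\<Sum>s<K. cnj (V $$ (s,a)) * V $$ (s,b))
          = (\<Sum>s<K. if s < P then cnj (A $$ (s,a)) * A $$ (s,b) / (complex_of_real (su a) * complex_of_real (su b)) else 0)"
        by (intro sum.cong refl) (use a1 b1 a b in \<open>simp add: V_def\<close>)
      also have "\<dots> = (\<Sum>s<P. cnj (A $$ (s,a)) * A $$ (s,b) / (complex_of_real (su a) * complex_of_real (su b)))"
        by (rule sum_restrict_lt) (use PK in simp)
      also have "\<dots> = (\<Sum>s<P. cnj (A $$ (s,a)) * A $$ (s,b)) / (complex_of_real (su a) * complex_of_real (su b))"
        by (simp add: sum_divide_distrib)
      also have "\<dots> = Dg $$ (a, b)"
      proof (cases "a = b")
        case True
        have "complex_of_real (su a) * complex_of_real (su a) = complex_of_real (r a)"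
          using su2[of a] unfolding of_real_mult[symmetric] by (simp add: power2_eq_square)
        then show ?thesis unfolding G[OF a1(1) b1(1)] using True a a1 ur[OF a1(1)] by (simp add: Dg_def)
      next
        case False
        then show ?thesis unfolding G[OF a1(1) b1(1)] using a b by (simp add: Dg_def)
      qed
      finally show ?thesis using e by simp
    next
      case False
      have "(\<Sum>s<K. cnj (V $$ (s,a)) * V $$ (s,b)) = 0"
      proof (intro sum.neutral ballI)
        fix s assume s: "s \<in> {..<K}"
        show "cnj (V $$ (s,a)) * V $$ (s,b) = 0"
        proof (cases "a < n+1 \<and> r a \<noteq> 0")
          case True
          then have "\<not> (b < n+1 \<and> r b \<noteq> 0)" using False by blast
          then have "V $$ (s,b) = 0" using s b unfolding V_def by auto
          then show ?thesis by simp
        next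
          case False
          then have "V $$ (s,a) = 0" using s a unfolding V_def by auto
          then show ?thesis by simp
        qed
      qed
      moreover have "Dg $$ (a, b) = 0" using False a b by (auto simp: Dg_def)
      ultimately show ?thesis using e by simp
    qed
  qed (simp_all add: Dg_def V_def)
  have DgDg: "Dg * Dg = Dg"
  proof (rule eq_matI)
    fix a b assume "a < dim_row Dg" "b < dim_col Dg"
    then have a: "a < K" and b: "b < K" unfolding Dg_def by simp_all
    have "(Dg * Dg) $$ (a, b) = (\<Sum>t\<in>{0..<K}. Dg $$ (a,t) * Dg $$ (t,b))"
      using a b Dgc by (simp add: scalar_prod_def carrier_matD)
    also have "\<dots> = (\<Sum>t\<in>{0..<K}. if t = a then Dg $$ (a, b) else 0)"
      by (intro sum.cong refl) (use a b in \<open>auto simp: Dg_def\<close>)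
    also have "\<dots> = Dg $$ (a, b)" using a by simp
    finally show "(Dg * Dg) $$ (a, b) = Dg $$ (a, b)" .
  qed (simp_all add: Dg_def)
  have VDg: "V * Dg = V"
  proof (rule eq_matI)
    fix a b assume "a < dim_row V" "b < dim_col V"
    then have a: "a < K" and b: "b < K" unfolding V_def by simp_all
    have "(V * Dg) $$ (a, b) = (\<Sum>t\<in>{0..<K}. V $$ (a,t) * Dg $$ (t,b))"
      using a b Dgc Vc by (simp add: scalar_prod_def carrier_matD)
    also have "\<dots> = (\<Sum>t\<in>{0..<K}. if t = b then V $$ (a, b) else 0)"
      by (intro sum.cong refl) (use a b in \<open>auto simp: Dg_def V_def\<close>)
    also have "\<dots> = V $$ (a, b)" using b by simp
    finally show "(V * Dg) $$ (a, b) = V $$ (a, b)" .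
  qed (simp_all add: Dg_def V_def)
  define U where "U = four_block_mat V (1\<^sub>m K - V * mat_adjoint V) (1\<^sub>m K - Dg) (mat_adjoint V)"
  have UU: "mat_adjoint U * U = 1\<^sub>m (K + K)"
    unfolding U_def by (rule dilation[OF Vc Dgc VV DgDg VDg])
  have Uc: "U \<in> carrier_mat (K + K) (K + K)"
    unfolding U_def using Vc by (intro four_block_carrier_mat) simp_all
  have dV: "dim_row V = K" "dim_col V = K" using Vc by (simp_all only: carrier_matD)
  have keyU: "\<And>rr c. rr < K + K \<Longrightarrow> c < n+1 \<Longrightarrow>
      U $$ (rr, c) * complex_of_real (su c) = (if rr < P then A $$ (rr,c) else 0)"
  proof -
    fix rr c assume rr: "rr < K + K" and c: "c < n+1"
    have cK: "c < K" using c nK by simp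
    have Ui: "U $$ (rr, c) = (if rr < K then V $$ (rr, c) else (1\<^sub>m K - Dg) $$ (rr - K, c))"
      unfolding U_def using rr cK dV by (subst index_mat_four_block) simp_all
    show "U $$ (rr, c) * complex_of_real (su c) = (if rr < P then A $$ (rr,c) else 0)"
    proof (cases "rr < K")
      case True
      show ?thesis
      proof (cases "rr < P \<and> r c \<noteq> 0")
        case True2: True
        then have "su c \<noteq> 0" using su0 by simp
        then show ?thesis using Ui True True2 c cK by (simp add: V_def)
      next
        case False2: False
        show ?thesis
        proof (cases "rr < P")
          case True3: True
          then have "r c = 0" using False2 by simp
          then show ?thesis using True3 colzero[OF c _ True3] su0 by simp
        next
          case False3: False
          then show ?thesis using Ui True cK by (simp add: V_def)
        qed
      qed
    next
      case False
      have rK: "rr - K < K" using rr False by simp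
      have "(1\<^sub>m K - Dg) $$ (rr - K, c) = (if rr - K = c then 1 else 0) - Dg $$ (rr - K, c)"
        using rK cK Dgc by (simp add: carrier_matD)
      also have "\<dots> = (if rr - K = c \<and> r c = 0 then 1 else 0)"
        using rK cK c by (simp add: Dg_def)
      finally have e: "U $$ (rr, c) = (if rr - K = c \<and> r c = 0 then 1 else 0)" using Ui False by simp
      have "\<not> rr < P" using False PK by simp
      then show ?thesis unfolding e using su0 by auto
    qed
  qed
  define m where "m = 2 * (P + 1)"
  define N where "N = (n+1) * m"
  have m0: "m > 0" unfolding m_def by simp
  have NK: "N = K + K" unfolding N_def m_def K_def by simp
  define sig where "sig t = (t mod m) * (n+1) + t div m" for t
  have divlt: "\<And>t. t < N \<Longrightarrow> t div m < n+1"
    unfolding N_def by (simp add: less_mult_imp_div_less)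
  have sigN: "\<And>t. t < N \<Longrightarrow> sig t < N"
  proof -
    fix t assume t: "t < N"
    have "Suc (t mod m) \<le> m" using m0 by (simp add: Suc_leI)
    then have "Suc (t mod m) * (n+1) \<le> m * (n+1)" by (rule mult_le_mono1)
    then show "sig t < N" unfolding sig_def N_def using divlt[OF t] by (simp add: mult.commute)
  qed
  have sigdm: "\<And>t. t < N \<Longrightarrow> sig t div (n+1) = t mod m \<and> sig t mod (n+1) = t div m"
  proof -
    fix t assume t: "t < N"
    have d: "t div m < n+1" by (rule divlt[OF t])
    have "sig t div (n+1) = t mod m + (t div m) div (n+1)"
      unfolding sig_def by (rule div_mult_self3) simp
    moreover have "sig t mod (n+1) = (t div m) mod (n+1)"
      unfolding sig_def by (rule mod_mult_self3)
    ultimately show "sig t div (n+1) = t mod m \<and> sig t mod (n+1) = t div m"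
      using d by simp
  qed
  have siginj: "\<And>a b. a < N \<Longrightarrow> b < N \<Longrightarrow> sig a = sig b \<Longrightarrow> a = b"
  proof -
    fix a b assume a: "a < N" and b: "b < N" and e: "sig a = sig b"
    have "a mod m = b mod m" "a div m = b div m" using sigdm[OF a] sigdm[OF b] e by simp_all
    then show "a = b" by (metis div_mult_mod_eq)
  qed
  have sigi: "\<And>i. i < n+1 \<Longrightarrow> sig (i*m) = i" unfolding sig_def using m0 by simp
  define U1 where "U1 = mat N N (\<lambda>(rr,c). U $$ (rr, sig c))"
  have U1c: "U1 \<in> carrier_mat N N" unfolding U1_def by simp
  have UU1: "mat_adjoint U1 * U1 = 1\<^sub>m N"
  proof (rule eq_matI)
    fix a b assume "a < dim_row (1\<^sub>m N :: complex mat)" "b < dim_col (1\<^sub>m N :: complex mat)"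
    then have a: "a < N" and b: "b < N" by simp_all
    have "(mat_adjoint U1 * U1) $$ (a, b) = (\<Sum>rr<N. cnj (U $$ (rr, sig a)) * U $$ (rr, sig b))"
      using a b by (simp add: U1_def scalar_prod_def lessThan_atLeast0 adj_index)
    also have "\<dots> = (mat_adjoint U * U) $$ (sig a, sig b)"
      using sigN[OF a] sigN[OF b] Uc unfolding NK by (simp add: scalar_prod_def lessThan_atLeast0 adj_index carrier_matD)
    also have "\<dots> = (if a = b then 1 else 0)"
      unfolding UU using sigN[OF a] sigN[OF b] siginj[OF a b] unfolding NK by auto
    also have "\<dots> = 1\<^sub>m N $$ (a, b)" using a b by simp
    finally show "(mat_adjoint U1 * U1) $$ (a, b) = 1\<^sub>m N $$ (a, b)" .
  qed (simp_all add: U1_def)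
  define psi where "psi = vec N (\<lambda>t. if t mod m = 0 then complex_of_real (su (t div m)) else 0)"
  have psic: "psi \<in> carrier_vec N" unfolding psi_def by simp
  have npsi: "vnorm2 psi = 1"
  proof -
    have "vnorm2 psi = (\<Sum>t<(n+1)*m. (cmod (psi $ t))\<^sup>2)" unfolding vnorm2_def psi_def N_def by simp
    also have "\<dots> = (\<Sum>i<n+1. (cmod (psi $ (i*m)))\<^sup>2)"
      by (rule sum_blocks[OF m0]) (simp add: psi_def N_def)
    also have "\<dots> = (\<Sum>i<n+1. r i)"
    proof (intro sum.cong refl)
      fix i assume i: "i \<in> {..<n+1}"
      have "i * m < N" unfolding N_def using i m0 by (intro mult_strict_right_mono) simp_all
      then have "psi $ (i*m) = complex_of_real (su i)" unfolding psi_def using m0 by simp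
      then show "(cmod (psi $ (i*m)))\<^sup>2 = r i" using su2[of i] su_def by simp
    qed
    finally show ?thesis using sumr by simp
  qed
  define P1 where "P1 = mat N N (\<lambda>(a,b). if a = b then (if a < p then 1 else 0) else (0::complex))"
  define P0 where "P0 = mat N N (\<lambda>(a,b). if a = b then (if a < p then 0 else 1) else (0::complex))"
  have P1o: "orth_projector N P1" unfolding P1_def by (rule diag_proj) simp_all
  have P0o: "orth_projector N P0" unfolding P0_def by (rule diag_proj) simp_all
  have Psum: "P0 + P1 = 1\<^sub>m N" unfolding P0_def P1_def by (intro eq_matI) simp_all
  have U0u: "unitary_mat N (1\<^sub>m N)" unfolding unitary_mat_def by (simp add: adj_one)
  have U1u: "unitary_mat N U1" unfolding unitary_mat_def using U1c UU1 by simp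
  have pP: "p \<le> P" unfolding P_def by simp
  have PN: "P \<le> N" using PK NK by simp
  have yval: "\<And>x. U1 *\<^sub>v (query_op n m x *\<^sub>v (1\<^sub>m N *\<^sub>v psi)) =
      vec N (\<lambda>rr. if rr < P then row A rr \<bullet> Fvec n x else 0)"
  proof -
    fix x
    have qd: "query_op n m x = mat N N (\<lambda>(a,b). if a = b then (if a div m = 0 then 1 else sgn_bit (x ! (a div m - 1))) else 0)"
      unfolding query_op_def N_def ..
    define z where "z = query_op n m x *\<^sub>v psi"
    have zc: "z \<in> carrier_vec N" unfolding z_def qd by (rule mult_mat_vec_carrier[OF _ psic]) simp
    have zt: "\<And>t. t < N \<Longrightarrow> z $ t = (if t div m = 0 then 1 else sgn_bit (x ! (t div m - 1))) * psi $ t"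
      unfolding z_def qd by (rule diag_mult_vec[OF psic])
    have e1: "1\<^sub>m N *\<^sub>v psi = psi" using psic by simp
    show "U1 *\<^sub>v (query_op n m x *\<^sub>v (1\<^sub>m N *\<^sub>v psi)) = vec N (\<lambda>rr. if rr < P then row A rr \<bullet> Fvec n x else 0)"
      unfolding e1 z_def[symmetric]
    proof (rule eq_vecI)
      fix rr assume "rr < dim_vec (vec N (\<lambda>rr. if rr < P then row A rr \<bullet> Fvec n x else 0))"
      then have rr: "rr < N" by simp
      have "(U1 *\<^sub>v z) $ rr = (\<Sum>t<(n+1)*m. U $$ (rr, sig t) * z $ t)"
        using rr zc unfolding U1_def N_def by (simp add: scalar_prod_def lessThan_atLeast0 carrier_vecD)
      also have "\<dots> = (\<Sum>i<n+1. U $$ (rr, sig (i*m)) * z $ (i*m))"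
        by (rule sum_blocks[OF m0]) (simp add: zt psi_def N_def)
      also have "\<dots> = (\<Sum>i<n+1. (if rr < P then A $$ (rr,i) else 0) * Fvec n x $ i)"
      proof (intro sum.cong refl)
        fix i assume i: "i \<in> {..<n+1}"
        then have i1: "i < n+1" by simp
        have imN: "i * m < N" unfolding N_def using i m0 by (intro mult_strict_right_mono) simp_all
        have "z $ (i*m) = Fvec n x $ i * complex_of_real (su i)"
          unfolding zt[OF imN] using m0 i1 imN by (simp add: psi_def Fvec_index)
        then have "U $$ (rr, sig (i*m)) * z $ (i*m) = (U $$ (rr, i) * complex_of_real (su i)) * Fvec n x $ i"
          unfolding sigi[OF i1] by (simp add: mult_ac)
        also have "\<dots> = (if rr < P then A $$ (rr,i) else 0) * Fvec n x $ i"
          using keyU[OF rr[unfolded NK] i1] by simp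
        finally show "U $$ (rr, sig (i*m)) * z $ (i*m) = (if rr < P then A $$ (rr,i) else 0) * Fvec n x $ i" .
      qed
      also have "\<dots> = (if rr < P then row A rr \<bullet> Fvec n x else 0)"
        using dA by (simp add: scalar_prod_def lessThan_atLeast0 Fvec_def)
      finally show "(U1 *\<^sub>v z) $ rr = vec N (\<lambda>rr. if rr < P then row A rr \<bullet> Fvec n x else 0) $ rr"
        using rr by simp
    qed (simp add: U1_def)
  qed
  have nP1: "\<And>y. y \<in> carrier_vec N \<Longrightarrow> vnorm2 (P1 *\<^sub>v y) = (\<Sum>a<p. (cmod (y $ a))\<^sup>2)"
  proof -
    fix y :: "complex vec" assume y: "y \<in> carrier_vec N"
    have "vnorm2 (P1 *\<^sub>v y) = (\<Sum>a<N. if a < p then (cmod (y $ a))\<^sup>2 else 0)"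
      unfolding P1_def diag_norm[OF y] by (intro sum.cong refl) simp
    also have "\<dots> = (\<Sum>a<p. (cmod (y $ a))\<^sup>2)" by (rule sum_restrict_lt) (use pP PN in simp)
    finally show "vnorm2 (P1 *\<^sub>v y) = (\<Sum>a<p. (cmod (y $ a))\<^sup>2)" .
  qed
  have nP0: "\<And>y. y \<in> carrier_vec N \<Longrightarrow> vnorm2 (P0 *\<^sub>v y) + vnorm2 (P1 *\<^sub>v y) = vnorm2 y"
  proof -
    fix y :: "complex vec" assume y: "y \<in> carrier_vec N"
    have dy: "dim_vec y = N" using y by (simp only: carrier_vecD)
    have "vnorm2 (P0 *\<^sub>v y) + vnorm2 (P1 *\<^sub>v y) = (\<Sum>a<N. (if a < p then 0 else (cmod (y $ a))\<^sup>2) + (if a < p then (cmod (y $ a))\<^sup>2 else 0))"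
      unfolding P1_def P0_def diag_norm[OF y] sum.distrib by (intro arg_cong2[where f="(+)"] sum.cong refl) simp_all
    also have "\<dots> = vnorm2 y" unfolding vnorm2_def dy by (intro sum.cong refl) simp
    finally show "vnorm2 (P0 *\<^sub>v y) + vnorm2 (P1 *\<^sub>v y) = vnorm2 y" .
  qed
  have ok: "\<forall>x\<in>D. vnorm2 ((if f x then P1 else P0) *\<^sub>v (U1 *\<^sub>v (query_op n m x *\<^sub>v (1\<^sub>m N *\<^sub>v psi)))) = 1"
  proof
    fix x assume xD: "x \<in> D"
    define y where "y = vec N (\<lambda>rr. if rr < P then row A rr \<bullet> Fvec n x else 0)"
    have yc: "y \<in> carrier_vec N" unfolding y_def by simp
    have h1: "vnorm2 (P1 *\<^sub>v y) = (\<Sum>l<p. (cmod (row A l \<bullet> Fvec n x))\<^sup>2)"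
      unfolding nP1[OF yc] using pP PN by (intro sum.cong refl) (simp add: y_def)
    have "vnorm2 y = (\<Sum>a<N. if a < P then (cmod (row A a \<bullet> Fvec n x))\<^sup>2 else 0)"
      unfolding vnorm2_def y_def by (intro sum.cong refl) simp_all
    also have "\<dots> = (\<Sum>a<P. (cmod (row A a \<bullet> Fvec n x))\<^sup>2)" by (rule sum_restrict_lt[OF PN])
    also have "\<dots> = 1" using sosT xD Dsub by blast
    finally have h2: "vnorm2 y = 1" .
    show "vnorm2 ((if f x then P1 else P0) *\<^sub>v (U1 *\<^sub>v (query_op n m x *\<^sub>v (1\<^sub>m N *\<^sub>v psi)))) = 1"
      unfolding yval y_def[symmetric] using sosD[OF xD] h1 h2 nP0[OF yc] by (cases "f x") simp_all
  qed
  show ?thesis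
    unfolding exact_1query_computable_def Let_def
    using m0 psic npsi U0u U1u P0o P1o Psum ok unfolding N_def by blast
qed


theorem theorem3:
  fixes n :: nat and D :: "bool list set" and f :: "bool list \<Rightarrow> bool"
  assumes "D \<subseteq> bitstrings n"
    and "\<exists>x\<in>D. \<exists>y\<in>D. f x \<noteq> f y"
  shows "exact_1query_computable n D f \<longleftrightarrow>
    (\<exists>p q A u. sos1_rep_matrix n D f p q A \<and>
       mat_adjoint A * A = mat (n + 1) (n + 1) (\<lambda>(i, j). if i = j then u i else 0))"
proof
  assume "exact_1query_computable n D f"
  then show "\<exists>p q A u. sos1_rep_matrix n D f p q A \<and>
       mat_adjoint A * A = mat (n + 1) (n + 1) (\<lambda>(i, j). if i = j then u i else 0)"
    using forward assms(1) by blast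
next
  assume "\<exists>p q A u. sos1_rep_matrix n D f p q A \<and>
       mat_adjoint A * A = mat (n + 1) (n + 1) (\<lambda>(i, j). if i = j then u i else 0)"
  then obtain p q A u where "sos1_rep_matrix n D f p q A"
    "mat_adjoint A * A = mat (n + 1) (n + 1) (\<lambda>(i, j). if i = j then u i else 0)" by blast
  then show "exact_1query_computable n D f" using backward assms(1) by blast
qed

end
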